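(* Let $G$ be a bipartite $d_1$-regular (multi)graph with $n$ vertices in each part, and let $\alpha$ be an upper bound on the second largest eigenvalue of $G$. Let $\gamma$ be an integer dividing $n$ and set $d_2 = \gamma d_1$. Let $H$ be the bipartite $(d_1,d_2)$-biregular multigraph obtained by partitioning one of the parts of $G$ into groups of $\gamma$ vertices (in an arbitrary way) and merging each group into a single vertex (keeping all edges, with multiplicity). Let $\lambda_2$ be the second largest eigenvalue of $H$. Then $$|\lambda_2| \le \sqrt{d_1d_2}\,\alpha.$$
   Context: Eigenvalues here are those of the non-normalized adjacency matrices (entries count edge multiplicities). For a bipartite biregular graph with degrees $d_L, d_R$, the eigenvalues of the adjacency matrix come in pairs $\pm\lambda$, the largest pair being $\pm\sqrt{d_Ld_R}$; the "second largest eigenvalue" is the nonnegative member of the next pair, i.e. the largest absolute value among the eigenvalues after removing one copy of $\sqrt{d_Ld_R}$ and one copy of $-\sqrt{d_Ld_R}$. Merging a set of vertices means replacing them by one vertex adjacent to all neighbors of the merged vertices, with multiplicities added. *)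

theory Defs
  imports "Jordan_Normal_Form.Char_Poly"
begin

text \<open>A bipartite multigraph with left vertices 0..<nL and right vertices 0..<nR is
given by its biadjacency function M (M i j = number of edges between left i and right j).\<close>

definition bip_adj :: "nat \<Rightarrow> nat \<Rightarrow> (nat \<Rightarrow> nat \<Rightarrow> nat) \<Rightarrow> real mat" where
  "bip_adj nL nR M = mat (nL + nR) (nL + nR) (\<lambda>(i, j).
      if i < nL \<and> nL \<le> j then real (M i (j - nL))
      else if nL \<le> i \<and> j < nL then real (M j (i - nL))
      else 0)"

text \<open>Eigenvalues of a real matrix, with multiplicity: the roots of its characteristic
polynomial (for a real symmetric matrix these are all its eigenvalues).\<close>

definition eigenvalues_mset :: "real mat \<Rightarrow> real multiset" where
  "eigenvalues_mset A = proots (char_poly A)"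

text \<open>Second largest eigenvalue of a bipartite biregular graph with top eigenvalue t =
sqrt(dL*dR): remove one copy of t and one copy of -t and take the largest absolute value
of the remaining eigenvalues (0 if nothing remains).\<close>

definition second_eig :: "real mat \<Rightarrow> real \<Rightarrow> real" where
  "second_eig A t = Max (insert 0 (abs ` set_mset (eigenvalues_mset A - {#t, -t#})))"

definition bip_biregular :: "nat \<Rightarrow> nat \<Rightarrow> (nat \<Rightarrow> nat \<Rightarrow> nat) \<Rightarrow> nat \<Rightarrow> nat \<Rightarrow> bool" where
  "bip_biregular nL nR M dL dR \<longleftrightarrow>
     (\<forall>i<nL. (\<Sum>j<nR. M i j) = dL) \<and> (\<forall>j<nR. (\<Sum>i<nL. M i j) = dR)"

text \<open>Merging the right part according to a grouping g : right vertices \<rightarrow> groups: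
group k becomes one vertex adjacent to all neighbours of its members, multiplicities added.\<close>

definition merge_right :: "nat \<Rightarrow> (nat \<Rightarrow> nat) \<Rightarrow> (nat \<Rightarrow> nat \<Rightarrow> nat) \<Rightarrow> (nat \<Rightarrow> nat \<Rightarrow> nat)" where
  "merge_right nR g M = (\<lambda>i k. \<Sum>j\<in>{j. j < nR \<and> g j = k}. M i j)"

end

theory Submission
  imports Defs
begin

lemma real_eigen:
  fixes S :: "real mat"
  assumes S: "S \<in> carrier_mat n n" and sym: "transpose_mat S = S" and n: "n > 0"
  shows "\<exists>r u. u \<in> carrier_vec n \<and> u \<bullet> u = 1 \<and> S *\<^sub>v u = r \<cdot>\<^sub>v u"
proof -
  define Sc where "Sc = map_mat complex_of_real S"
  have Sc: "Sc \<in> carrier_mat n n" using S unfolding Sc_def by simp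
  obtain as where cp: "char_poly Sc = (\<Prod>a\<leftarrow>as. [:- a, 1:])" and las: "length as = n"
    using char_poly_factorized[OF Sc] by blast
  define z where "z = as ! 0"
  have "z \<in> set as" using las n unfolding z_def by simp
  hence "poly (char_poly Sc) z = 0" unfolding cp by (rule linear_poly_root)
  hence "eigenvalue Sc z" using eigenvalue_root_char_poly[OF Sc] by simp
  then obtain v where ev: "eigenvector Sc v z" unfolding eigenvalue_def by blast
  have v: "v \<in> carrier_vec n" and v0: "v \<noteq> 0\<^sub>v n" and Sv: "Sc *\<^sub>v v = z \<cdot>\<^sub>v v"
    using ev Sc unfolding eigenvector_def by auto
  have Sij: "\<And>i j. i < n \<Longrightarrow> j < n \<Longrightarrow> S $$ (i,j) = S $$ (j,i)"
    using sym S by (metis carrier_matD index_transpose_mat(1))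
  define q where "q = (\<Sum>i<n. cnj (v$i) * (Sc *\<^sub>v v) $ i)"
  have q1: "q = z * (\<Sum>i<n. cnj (v$i) * v$i)"
    unfolding q_def sum_distrib_left using Sv v by (auto intro!: sum.cong)
  have q2: "q = (\<Sum>i<n. \<Sum>j<n. cnj (v$i) * of_real (S$$(i,j)) * v$j)"
    unfolding q_def using v Sc S
    by (auto simp: Sc_def scalar_prod_def sum_distrib_left intro!: sum.cong ac_simps)
  have "cnj q = (\<Sum>i<n. \<Sum>j<n. v$i * of_real (S$$(i,j)) * cnj (v$j))"
    unfolding q2 by (simp add: cnj_sum)
  also have "\<dots> = (\<Sum>j<n. \<Sum>i<n. v$i * of_real (S$$(i,j)) * cnj (v$j))"
    by (rule sum.swap)
  also have "\<dots> = q" unfolding q2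
    by (intro sum.cong refl, simp add: Sij mult_ac)
  finally have cq: "cnj q = q" .
  define s where "s = (\<Sum>i<n. (cmod (v$i))^2)"
  have s_eq: "(\<Sum>i<n. cnj (v$i) * v$i) = of_real s"
    unfolding s_def of_real_sum by (intro sum.cong refl, metis complex_norm_square mult.commute)
  obtain i where i: "i < n" "v $ i \<noteq> 0" using v v0 by (metis carrier_vecD eq_vecI index_zero_vec)
  have "(cmod (v$i))^2 > 0" using i by simp
  moreover have "(cmod (v$i))^2 \<le> s" unfolding s_def
    by (rule member_le_sum, use i in auto)
  ultimately have spos: "s > 0" by linarith
  have qz: "q = z * of_real s" using q1 s_eq by simp
  have s0: "(of_real s :: complex) \<noteq> 0" using spos by simp
  have zq: "z = q / of_real s" using qz s0 by simp
  have "cnj z = cnj q / cnj (of_real s)" unfolding zq by (rule complex_cnj_divide)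
  also have "\<dots> = z" unfolding zq cq by simp
  finally have "z \<in> \<real>" using Reals_cnj_iff by blast
  hence zr: "z = of_real (Re z)" by (simp add: of_real_Re)
  define r where "r = Re z"
  have "char_poly Sc = map_poly of_real (char_poly S)"
    unfolding Sc_def by (rule of_real_hom.char_poly_hom[OF S])
  hence "of_real (poly (char_poly S) r) = (0::complex)"
    using \<open>poly (char_poly Sc) z = 0\<close> zr unfolding r_def
    by (metis of_real_hom.poly_map_poly)
  hence "poly (char_poly S) r = 0" by simp
  hence "eigenvalue S r" using eigenvalue_root_char_poly[OF S] by simp
  then obtain u0 where ev0: "eigenvector S u0 r" unfolding eigenvalue_def by blast
  have u0: "u0 \<in> carrier_vec n" and u00: "u0 \<noteq> 0\<^sub>v n" and Su0: "S *\<^sub>v u0 = r \<cdot>\<^sub>v u0"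
    using ev0 S unfolding eigenvector_def by auto
  obtain k where k: "k < n" "u0 $ k \<noteq> 0" using u0 u00 by (metis carrier_vecD eq_vecI index_zero_vec)
  have nn: "u0 \<bullet> u0 = (\<Sum>i<n. (u0$i)^2)" using u0 by (simp add: scalar_prod_def power2_eq_square lessThan_atLeast0)
  have "(u0$k)^2 \<le> (\<Sum>i<n. (u0$i)^2)" by (rule member_le_sum, use k in auto)
  moreover have "(u0$k)^2 > 0" using k by simp
  ultimately have npos: "u0 \<bullet> u0 > 0" using nn by linarith
  define u where "u = (1 / sqrt (u0 \<bullet> u0)) \<cdot>\<^sub>v u0"
  have uc: "u \<in> carrier_vec n" using u0 unfolding u_def by simp
  have "u \<bullet> u = (1 / sqrt (u0 \<bullet> u0))^2 * (u0 \<bullet> u0)"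
    unfolding u_def using u0 by (simp add: power2_eq_square)
  also have "\<dots> = 1" using npos by (simp add: power_divide)
  finally have uu: "u \<bullet> u = 1" .
  have "S *\<^sub>v u = r \<cdot>\<^sub>v u" unfolding u_def using mult_mat_vec[OF S u0] Su0
    by (simp add: smult_smult_assoc mult.commute)
  with uc uu show ?thesis by blast
qed

definition hh :: "nat \<Rightarrow> real vec \<Rightarrow> real mat" where
 "hh N u = mat N N (\<lambda>(i,j). (if i = j then 1 else 0) -
     (2 / (\<Sum>k<N. (u$k - (if k = 0 then 1 else 0))^2)) *
        (u$i - (if i = 0 then 1 else 0)) * (u$j - (if j = 0 then 1 else 0)))"

lemma hh_carrier: "hh N u \<in> carrier_mat N N" unfolding hh_def by simp

lemma hh_sym: "transpose_mat (hh N u) = hh N u"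
  unfolding hh_def by (rule eq_matI, auto)

lemma hh_sq:
  fixes u :: "real vec"
  shows "hh N u * hh N u = 1\<^sub>m N"
proof (rule eq_matI)
  define w where "w = (\<lambda>k. u$k - (if k = 0 then 1 else (0::real)))"
  define s where "s = (\<Sum>k<N. (w k)^2)"
  define c where "c = 2 / s"
  have H: "hh N u = mat N N (\<lambda>(i,j). (if i = j then 1 else 0) - c * w i * w j)"
    unfolding hh_def w_def c_def s_def by simp
  fix i j assume i: "i < dim_row (1\<^sub>m N)" and j: "j < dim_col (1\<^sub>m N)"
  hence i: "i < N" and j: "j < N" by auto
  have "(hh N u * hh N u) $$ (i,j) = (\<Sum>k<N. ((if i = k then 1 else 0) - c * w i * w k) * ((if k = j then 1 else 0) - c * w k * w j))"
    unfolding H using i j by (simp add: scalar_prod_def lessThan_atLeast0)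
  also have "\<dots> = (\<Sum>k<N. (if i = k then 1 else 0) * (if k = j then 1 else 0))
     - (\<Sum>k<N. (if i = k then 1 else 0) * (c * w k * w j))
     - (\<Sum>k<N. (if k = j then 1 else 0) * (c * w i * w k))
     + (c * c * w i * w j) * (\<Sum>k<N. (w k)^2)"
    by (simp add: algebra_simps sum_subtractf sum.distrib sum_distrib_left power2_eq_square)
  also have "\<dots> = (if i = j then 1 else 0) - 2 * c * w i * w j + (c * c * w i * w j) * s"
    using i j unfolding s_def by (simp add: if_distrib[of "\<lambda>x. x * _"] cong: if_cong)
  also have "\<dots> = (if i = j then 1 else 0)"
  proof (cases "s = 0")
    case True thus ?thesis unfolding c_def by simp
  next
    case False
    hence "c * s = 2" unfolding c_def by simp
    hence "(c * c * w i * w j) * s = 2 * c * w i * w j" by (simp add: algebra_simps)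
    thus ?thesis by simp
  qed
  finally show "(hh N u * hh N u) $$ (i,j) = 1\<^sub>m N $$ (i,j)" using i j by simp
next
  show "dim_row (hh N u * hh N u) = dim_row (1\<^sub>m N)" "dim_col (hh N u * hh N u) = dim_col (1\<^sub>m N)"
    unfolding hh_def by auto
qed

lemma hh_col0:
  fixes u :: "real vec"
  assumes u: "u \<in> carrier_vec N" and uu: "u \<bullet> u = 1" and i: "i < N"
  shows "hh N u $$ (i,0) = u $ i"
proof -
  have N: "0 < N" using i by simp
  define w where "w = (\<lambda>k. u$k - (if k = 0 then 1 else (0::real)))"
  define s where "s = (\<Sum>k<N. (w k)^2)"
  have H: "hh N u $$ (i,0) = (if i = 0 then 1 else 0) - (2/s) * w i * w 0"
    unfolding hh_def w_def s_def using i N by simp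
  have u2: "(\<Sum>k<N. (u$k)^2) = 1" using uu u
    by (simp add: scalar_prod_def power2_eq_square lessThan_atLeast0)
  have "s = (\<Sum>k<N. (u$k)^2) - (\<Sum>k<N. u $ k * (2 * (if k = 0 then 1 else 0))) + (\<Sum>k<N. (if k = 0 then 1 else 0))"
    unfolding s_def w_def by (simp add: power2_eq_square algebra_simps sum_subtractf sum.distrib if_distrib[of "\<lambda>x. x * _"] cong: if_cong)
  also have "\<dots> = 2 - 2 * u$0" using u2 N by (simp add: if_distrib[of "\<lambda>x. _ * x"] cong: if_cong)
  finally have s: "s = 2 - 2 * u$0" .
  show ?thesis
  proof (cases "s = 0")
    case True
    hence "\<forall>k\<in>{..<N}. (w k)^2 = 0" unfolding s_def
      by (subst sum_nonneg_eq_0_iff[symmetric], auto)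
    hence "w i = 0" using i by simp
    thus ?thesis using H True unfolding w_def by simp
  next
    case False
    have w0: "w 0 = u$0 - 1" unfolding w_def by simp
    have "(2/s) * w 0 = -1" using False unfolding s w0 by (simp add: field_simps)
    hence "(2/s) * w i * w 0 = - w i" by (metis mult.commute mult.left_commute mult_minus1_right)
    thus ?thesis using H unfolding w_def by auto
  qed
qed

definition Dg :: "nat \<Rightarrow> (nat \<Rightarrow> real) \<Rightarrow> real mat" where
  "Dg N l = mat N N (\<lambda>(i,j). if i = j then l i else 0)"

lemma Dg_carrier[simp]: "Dg N l \<in> carrier_mat N N" unfolding Dg_def by simp
lemma Dg_dims[simp]: "dim_row (Dg N l) = N" "dim_col (Dg N l) = N" unfolding Dg_def by simp_all

lemma spectral_ex:
  fixes S :: "real mat"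
  shows "S \<in> carrier_mat N N \<Longrightarrow> transpose_mat S = S \<Longrightarrow>
    \<exists>U l. U \<in> carrier_mat N N \<and> transpose_mat U * U = 1\<^sub>m N \<and> S * U = U * Dg N l"
proof (induction N arbitrary: S)
  case 0
  show ?case
    by (rule exI[of _ "1\<^sub>m 0"], rule exI[of _ "\<lambda>_. 0"], insert 0, auto intro!: eq_matI simp: Dg_def)
next
  case (Suc N S)
  have S: "S \<in> carrier_mat (Suc N) (Suc N)" and sym: "transpose_mat S = S" by fact+
  obtain r u where u: "u \<in> carrier_vec (Suc N)" and uu: "u \<bullet> u = 1" and Su: "S *\<^sub>v u = r \<cdot>\<^sub>v u"
    using real_eigen[OF S sym] by auto
  define H where "H = hh (Suc N) u"
  have H: "H \<in> carrier_mat (Suc N) (Suc N)" unfolding H_def by (rule hh_carrier)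
  have Ht: "transpose_mat H = H" unfolding H_def by (rule hh_sym)
  have HH: "H * H = 1\<^sub>m (Suc N)" unfolding H_def by (rule hh_sq)
  have colH: "col H 0 = u"
    by (rule eq_vecI, insert u H, auto simp: H_def hh_col0[OF u uu])
  define T where "T = H * S * H"
  have T: "T \<in> carrier_mat (Suc N) (Suc N)" unfolding T_def using H S by auto
  have HS: "H * S \<in> carrier_mat (Suc N) (Suc N)" using H S by simp
  have Tt: "transpose_mat T = T" unfolding T_def
    using transpose_mult[OF HS H] transpose_mult[OF H S] H S Ht sym
    by (metis assoc_mult_mat)
  have "col T 0 = (H * S) *\<^sub>v u" unfolding T_def using H S colH by (subst col_mult2, auto)
  also have "\<dots> = H *\<^sub>v (r \<cdot>\<^sub>v u)" using H S u Su by simp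
  also have "\<dots> = r \<cdot>\<^sub>v (H *\<^sub>v u)" using mult_mat_vec[OF H u] .
  also have "H *\<^sub>v u = col (H * H) 0" using col_mult2[OF H H, of 0] colH by simp
  also have "\<dots> = unit_vec (Suc N) 0" unfolding HH by simp
  finally have colT: "col T 0 = r \<cdot>\<^sub>v unit_vec (Suc N) 0" .
  have T0: "\<And>i. i < Suc N \<Longrightarrow> T $$ (i,0) = (if i = 0 then r else 0)"
  proof -
    fix i assume i: "i < Suc N"
    have "T $$ (i,0) = col T 0 $ i" using T i by simp
    thus "T $$ (i,0) = (if i = 0 then r else 0)" unfolding colT using i by simp
  qed
  have Tsym: "\<And>i j. i < Suc N \<Longrightarrow> j < Suc N \<Longrightarrow> T $$ (i,j) = T $$ (j,i)"
    using Tt T by (metis carrier_matD index_transpose_mat(1))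
  define S' where "S' = mat N N (\<lambda>(i,j). T $$ (Suc i, Suc j))"
  have S': "S' \<in> carrier_mat N N" unfolding S'_def by simp
  have S't: "transpose_mat S' = S'" unfolding S'_def
    by (rule eq_matI, auto simp: Tsym)
  obtain U' l' where U': "U' \<in> carrier_mat N N" and U'U': "transpose_mat U' * U' = 1\<^sub>m N"
    and SU': "S' * U' = U' * Dg N l'" using Suc.IH[OF S' S't] by blast
  define D1 where "D1 = Dg 1 (\<lambda>_. r)"
  have D1: "D1 \<in> carrier_mat 1 1" unfolding D1_def by simp
  define l where "l = (\<lambda>i. if i = 0 then r else l' (i - 1))"
  have Tb: "T = four_block_mat D1 (0\<^sub>m 1 N) (0\<^sub>m N 1) S'"
    by (rule eq_matI, insert T T0 Tsym, auto simp: D1_def Dg_def S'_def)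
  have Db: "Dg (Suc N) l = four_block_mat D1 (0\<^sub>m 1 N) (0\<^sub>m N 1) (Dg N l')"
    by (rule eq_matI, auto simp: D1_def Dg_def l_def)
  define U'' where "U'' = four_block_mat (1\<^sub>m 1) (0\<^sub>m 1 N) (0\<^sub>m N 1) U'"
  have U'': "U'' \<in> carrier_mat (Suc N) (Suc N)" unfolding U''_def using U' by auto
  have U''U'': "transpose_mat U'' * U'' = 1\<^sub>m (Suc N)"
    unfolding U''_def
    by (subst transpose_four_block_mat[of _ 1 1 _ N _ N], insert U', auto,
        subst mult_four_block_mat[of _ 1 1 _ N _ N], insert U' U'U', auto)
  have TU: "T * U'' = U'' * Dg (Suc N) l"
    unfolding Tb Db U''_def
    by (subst mult_four_block_mat[of _ 1 1 _ N _ N], insert U' D1 S', auto,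
        subst mult_four_block_mat[of _ 1 1 _ N _ N], insert U' D1 S' Dg_carrier[of N l'], auto simp: SU')
  define U where "U = H * U''"
  have Uc: "U \<in> carrier_mat (Suc N) (Suc N)" unfolding U_def using H U'' by auto
  have "transpose_mat U * U = transpose_mat U'' * (H * H) * U''"
  proof -
    have U''t: "transpose_mat U'' \<in> carrier_mat (Suc N) (Suc N)" using U'' by simp
    show ?thesis unfolding U_def transpose_mult[OF H U''] Ht
      using assoc_mult_mat[OF U''t H, of "H * U''" "Suc N"] assoc_mult_mat[OF H H U''] 
        assoc_mult_mat[OF U''t mult_carrier_mat[OF H H] U''] H U'' U''t by simp
  qed
  also have "\<dots> = 1\<^sub>m (Suc N)" unfolding HH using U'' U''U'' by simp
  finally have UU: "transpose_mat U * U = 1\<^sub>m (Suc N)" .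
  have HT: "H * T = S * H" unfolding T_def using H S HH
    by (metis assoc_mult_mat left_mult_one_mat mult_carrier_mat)
  have "S * U = (S * H) * U''" unfolding U_def using S H U'' by simp
  also have "\<dots> = H * (T * U'')" unfolding HT[symmetric] using H T U'' by simp
  also have "\<dots> = U * Dg (Suc N) l" unfolding TU U_def using assoc_mult_mat[OF H U'' Dg_carrier] by simp
  finally show ?case using Uc UU by blast
qed

definition spec :: "nat \<Rightarrow> real mat \<Rightarrow> real mat \<Rightarrow> (nat \<Rightarrow> real) \<Rightarrow> bool" where
 "spec N S U l \<longleftrightarrow> S \<in> carrier_mat N N \<and> U \<in> carrier_mat N N \<and> transpose_mat U * U = 1\<^sub>m N
    \<and> U * transpose_mat U = 1\<^sub>m N \<and> S = U * Dg N l * transpose_mat U"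

lemma spec_ex:
  fixes S :: "real mat"
  assumes S: "S \<in> carrier_mat N N" and sym: "transpose_mat S = S"
  shows "\<exists>U l. spec N S U l"
proof -
  obtain U l where U: "U \<in> carrier_mat N N" and UU: "transpose_mat U * U = 1\<^sub>m N"
    and SU: "S * U = U * Dg N l" using spectral_ex[OF S sym] by blast
  have Ut: "transpose_mat U \<in> carrier_mat N N" using U by simp
  have UU': "U * transpose_mat U = 1\<^sub>m N" by (rule mat_mult_left_right_inverse[OF Ut U UU])
  have "S = S * (U * transpose_mat U)" using S UU' by simp
  also have "\<dots> = (S * U) * transpose_mat U" using S U Ut by simp
  also have "\<dots> = U * Dg N l * transpose_mat U" unfolding SU ..
  finally show ?thesis unfolding spec_def using S U UU UU' by blast
qed

lemma sum_list_singletons: "(\<Sum>a\<leftarrow>xs. {#a#}) = mset xs"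
  by (induction xs) auto

lemma proots_lin: "proots (\<Prod>a\<leftarrow>xs. [:- a, 1:]) = mset (xs :: real list)"
proof (induction xs)
  case (Cons a xs)
  have "(\<Prod>b\<leftarrow>a#xs. [:- b, 1:]) = [:- a, 1:] * (\<Prod>b\<leftarrow>xs. [:- b, 1:])" by simp
  moreover have "(\<Prod>b\<leftarrow>xs. [:- b, 1:]) \<noteq> 0" by (auto simp: prod_list_zero_iff)
  ultimately have "proots (\<Prod>b\<leftarrow>a#xs. [:- b, 1:]) = proots [:- a, 1:] + proots (\<Prod>b\<leftarrow>xs. [:- b, 1:])"
    using proots_mult[of "[:- a, 1:]" "\<Prod>b\<leftarrow>xs. [:- b, 1:]"] by (metis pCons_eq_0_iff one_neq_zero)
  also have "proots [:- a, 1:] = {#a#}" using proots_linear_factor[of "-a"] by simp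
  finally show ?case using Cons by simp
qed simp

lemma spec_proots:
  assumes sp: "spec N S U l"
  shows "proots (char_poly S) = mset (map l [0..<N])"
proof -
  from sp have S: "S \<in> carrier_mat N N" and U: "U \<in> carrier_mat N N" and UU: "transpose_mat U * U = 1\<^sub>m N"
    and UU': "U * transpose_mat U = 1\<^sub>m N" and SD: "S = U * Dg N l * transpose_mat U"
    unfolding spec_def by auto
  have "similar_mat S (Dg N l)"
    by (rule similar_matI[of S "Dg N l" U "transpose_mat U" N], insert S U UU UU' SD, auto)
  hence "char_poly S = char_poly (Dg N l)" by (rule char_poly_similar)
  also have "\<dots> = (\<Prod>a\<leftarrow>diag_mat (Dg N l). [:- a, 1:])"
    by (rule char_poly_upper_triangular[of _ N], auto simp: upper_triangular_def Dg_def)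
  also have "diag_mat (Dg N l) = map l [0..<N]"
    by (rule nth_equalityI, auto simp: diag_mat_def Dg_def)
  finally have cp: "char_poly S = (\<Prod>a\<leftarrow>map l [0..<N]. [:- a, 1:])" .
  show ?thesis unfolding cp by (rule proots_lin)
qed

context
  fixes N S U l
  assumes sp: "spec N S U l"
begin

lemma spD: "S \<in> carrier_mat N N" "U \<in> carrier_mat N N" "transpose_mat U * U = 1\<^sub>m N"
   "U * transpose_mat U = 1\<^sub>m N" "S = U * Dg N l * transpose_mat U" "transpose_mat U \<in> carrier_mat N N"
  using sp unfolding spec_def by auto

lemma spec_coord: "y \<in> carrier_vec N \<Longrightarrow> transpose_mat U *\<^sub>v (U *\<^sub>v y) = y"
  using spD by (metis assoc_mult_mat_vec one_mult_mat_vec)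

lemma spec_recon: "x \<in> carrier_vec N \<Longrightarrow> U *\<^sub>v (transpose_mat U *\<^sub>v x) = x"
  using spD by (metis assoc_mult_mat_vec one_mult_mat_vec)

lemma spec_inner: "x \<in> carrier_vec N \<Longrightarrow> x' \<in> carrier_vec N \<Longrightarrow>
   x \<bullet> x' = (transpose_mat U *\<^sub>v x) \<bullet> (transpose_mat U *\<^sub>v x')"
proof -
  assume x: "x \<in> carrier_vec N" and x': "x' \<in> carrier_vec N"
  have "(transpose_mat U *\<^sub>v x) \<bullet> (transpose_mat U *\<^sub>v x') = x \<bullet> (U *\<^sub>v (transpose_mat U *\<^sub>v x'))"
    by (rule transpose_vec_mult_scalar[OF spD(2)], insert x x' spD, auto)
  thus ?thesis using spec_recon[OF x'] by simp
qed

lemma spec_quad: "x \<in> carrier_vec N \<Longrightarrow>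
   x \<bullet> (S *\<^sub>v x) = (\<Sum>i<N. l i * ((transpose_mat U *\<^sub>v x) $ i)^2)"
proof -
  assume x: "x \<in> carrier_vec N"
  define y where "y = transpose_mat U *\<^sub>v x"
  have y: "y \<in> carrier_vec N" unfolding y_def using spD x by simp
  have UD: "U * Dg N l \<in> carrier_mat N N" using spD by simp
  have "S *\<^sub>v x = (U * Dg N l) *\<^sub>v y"
    unfolding y_def spD(5) using assoc_mult_mat_vec[OF UD spD(6) x] .
  also have "\<dots> = U *\<^sub>v (Dg N l *\<^sub>v y)" using assoc_mult_mat_vec[OF spD(2) Dg_carrier y] .
  finally have "S *\<^sub>v x = U *\<^sub>v (Dg N l *\<^sub>v y)" .
  hence "x \<bullet> (S *\<^sub>v x) = x \<bullet> (U *\<^sub>v (Dg N l *\<^sub>v y))" by simp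
  also have "\<dots> = y \<bullet> (Dg N l *\<^sub>v y)"
  proof -
    have Dy: "Dg N l *\<^sub>v y \<in> carrier_vec N" using y by (rule mult_mat_vec_carrier[OF Dg_carrier])
    show ?thesis using transpose_vec_mult_scalar[OF spD(2) Dy x, folded y_def] by simp
  qed
  also have "\<dots> = (\<Sum>i<N. l i * (y $ i)^2)"
  proof -
    have ifm: "\<And>a P b. (a::real) * (if P then b else 0) = (if P then a*b else 0)" by simp
    show ?thesis
    using y by (simp add: scalar_prod_def Dg_def lessThan_atLeast0 power2_eq_square ifm mult_ac cong: if_cong)
  qed
  finally show ?thesis unfolding y_def .
qed

lemma spec_eig: "f \<in> carrier_vec N \<Longrightarrow> S *\<^sub>v f = \<mu> \<cdot>\<^sub>v f \<Longrightarrow> i < N \<Longrightarrow> l i \<noteq> \<mu> \<Longrightarrow>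
   (transpose_mat U *\<^sub>v f) $ i = 0"
proof -
  assume f: "f \<in> carrier_vec N" and Sf: "S *\<^sub>v f = \<mu> \<cdot>\<^sub>v f" and i: "i < N" and li: "l i \<noteq> \<mu>"
  define z where "z = transpose_mat U *\<^sub>v f"
  have z: "z \<in> carrier_vec N" unfolding z_def using spD f by simp
  have "transpose_mat U *\<^sub>v (S *\<^sub>v f) = Dg N l *\<^sub>v z"
  proof -
    have "transpose_mat U * S = Dg N l * transpose_mat U"
      using spD by (metis assoc_mult_mat left_mult_one_mat Dg_carrier mult_carrier_mat)
    hence "(transpose_mat U * S) *\<^sub>v f = (Dg N l * transpose_mat U) *\<^sub>v f" by simp
    thus ?thesis unfolding z_def using spD f by (simp add: assoc_mult_mat_vec[of _ N N _ N])
  qed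
  also have "transpose_mat U *\<^sub>v (S *\<^sub>v f) = \<mu> \<cdot>\<^sub>v z" unfolding Sf z_def
    by (rule mult_mat_vec[OF spD(6) f])
  finally have "(Dg N l *\<^sub>v z) $ i = (\<mu> \<cdot>\<^sub>v z) $ i" by simp
  hence "l i * z $ i = \<mu> * z $ i" using i z
    by (simp add: Dg_def scalar_prod_def if_distrib[of "\<lambda>x. x * _"] cong: if_cong)
  thus ?thesis using li unfolding z_def by simp
qed

end

lemma sum_two_delta:
  fixes N i j :: nat
  assumes "i < N" "j < N" "i \<noteq> j"
  shows "(\<Sum>k<N. (if k = i then f k else if k = j then g k else (0::real))) = f i + g j"
proof -
  have "(\<Sum>k<N. (if k = i then f k else if k = j then g k else (0::real)))
      = (\<Sum>k<N. (if k = i then f k else 0) + (if k = j then g k else 0))"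
    by (rule sum.cong, insert assms, auto)
  also have "\<dots> = (\<Sum>k<N. (if k = i then f k else 0)) + (\<Sum>k<N. (if k = j then g k else 0))"
    by (rule sum.distrib)
  also have "(\<Sum>k<N. (if k = i then f k else 0)) = f i" using assms(1) by (subst sum.delta, auto)
  also have "(\<Sum>k<N. (if k = j then g k else 0)) = g j" using assms(2) by (subst sum.delta, auto)
  finally show ?thesis .
qed

lemma scalar_single:
  assumes y: "y \<in> carrier_vec N" and z: "z \<in> carrier_vec N" and i: "i < N"
    and supp: "\<forall>k<N. k \<noteq> i \<longrightarrow> z $ k = 0"
  shows "y \<bullet> z = y $ i * (z $ i :: real)"
proof -
  have "y \<bullet> z = (\<Sum>k<N. y $ k * z $ k)" using y z by (simp add: scalar_prod_def lessThan_atLeast0)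
  also have "\<dots> = (\<Sum>k<N. if k = i then y $ k * z $ k else 0)"
    by (rule sum.cong, insert supp, auto)
  also have "\<dots> = y $ i * z $ i" using i by simp
  finally show ?thesis .
qed

lemma spec_at_most_one:
  assumes sp: "spec N S U l" and w: "w \<in> carrier_vec N"
    and hyp: "\<forall>v\<in>carrier_vec N. v \<bullet> w = 0 \<longrightarrow> \<sigma> * (v \<bullet> (S *\<^sub>v v)) \<le> c * (v \<bullet> v)"
    and i: "i < N" and j: "j < N" and li: "\<sigma> * l i > c" and lj: "\<sigma> * l j > c"
  shows "i = j"
proof (rule ccontr)
  assume ij: "i \<noteq> j"
  note spD = spD[OF sp]
  define z where "z = transpose_mat U *\<^sub>v w"
  have z: "z \<in> carrier_vec N" unfolding z_def using spD w by simp
  define a where "a = (if z$i = 0 \<and> z$j = 0 then 1 else z$j)"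
  define b where "b = (if z$i = 0 \<and> z$j = 0 then 0 else - z$i)"
  have ab: "a * z$i + b * z$j = 0" unfolding a_def b_def by auto
  have ab0: "a \<noteq> 0 \<or> b \<noteq> 0" unfolding a_def b_def by auto
  define y where "y = vec N (\<lambda>k. if k = i then a else if k = j then b else 0)"
  have y: "y \<in> carrier_vec N" unfolding y_def by simp
  define v where "v = U *\<^sub>v y"
  have v: "v \<in> carrier_vec N" unfolding v_def using spD y by simp
  have Uv: "transpose_mat U *\<^sub>v v = y" unfolding v_def by (rule spec_coord[OF sp y])
  have "v \<bullet> w = y \<bullet> z" unfolding spec_inner[OF sp v w] Uv z_def ..
  also have "\<dots> = (\<Sum>k<N. (if k = i then a * z$k else if k = j then b * z$k else 0))"
    using y z by (auto simp: scalar_prod_def lessThan_atLeast0 y_def intro!: sum.cong)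
  also have "\<dots> = 0" using sum_two_delta[OF i j ij] ab by simp
  finally have vw: "v \<bullet> w = 0" .
  have "v \<bullet> v = y \<bullet> y" unfolding spec_inner[OF sp v v] Uv ..
  also have "\<dots> = (\<Sum>k<N. (if k = i then a * a else if k = j then b * b else 0))"
    using y by (auto simp: scalar_prod_def lessThan_atLeast0 y_def intro!: sum.cong)
  also have "\<dots> = a * a + b * b" using sum_two_delta[OF i j ij] by simp
  finally have vv: "v \<bullet> v = a * a + b * b" .
  have "v \<bullet> (S *\<^sub>v v) = (\<Sum>k<N. l k * (y $ k)^2)" unfolding spec_quad[OF sp v] Uv ..
  also have "\<dots> = (\<Sum>k<N. (if k = i then l k * (a * a) else if k = j then l k * (b * b) else 0))"
    using y by (auto simp: y_def power2_eq_square intro!: sum.cong)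
  also have "\<dots> = l i * (a * a) + l j * (b * b)" using sum_two_delta[OF i j ij] by simp
  finally have vSv: "v \<bullet> (S *\<^sub>v v) = l i * (a * a) + l j * (b * b)" .
  have "\<sigma> * (v \<bullet> (S *\<^sub>v v)) \<le> c * (v \<bullet> v)" using hyp v vw by blast
  hence "(\<sigma> * l i - c) * (a * a) + (\<sigma> * l j - c) * (b * b) \<le> 0" unfolding vSv vv by (simp add: algebra_simps)
  moreover have "(\<sigma> * l i - c) * (a * a) + (\<sigma> * l j - c) * (b * b) > 0"
  proof -
    have "(\<sigma> * l i - c) * (a * a) \<ge> 0" "(\<sigma> * l j - c) * (b * b) \<ge> 0" using li lj by auto
    moreover have "(\<sigma> * l i - c) * (a * a) > 0 \<or> (\<sigma> * l j - c) * (b * b) > 0"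
    proof (cases "a = 0")
      case False
      hence "a * a > 0" using not_real_square_gt_zero by blast
      thus ?thesis using li by simp
    next
      case True
      hence "b * b > 0" using ab0 not_real_square_gt_zero by blast
      thus ?thesis using lj by simp
    qed
    ultimately show ?thesis by linarith
  qed
  ultimately show False by linarith
qed

lemma spec_bound_perp:
  assumes sp: "spec N S U l"
    and f1: "f1 \<in> carrier_vec N" "S *\<^sub>v f1 = \<mu>1 \<cdot>\<^sub>v f1" "f1 \<noteq> 0\<^sub>v N"
    and f2: "f2 \<in> carrier_vec N" "S *\<^sub>v f2 = \<mu>2 \<cdot>\<^sub>v f2" "f2 \<noteq> 0\<^sub>v N"
    and hyp: "\<forall>i<N. \<bar>l i\<bar> \<le> \<beta> \<or> ((l i = \<mu>1 \<or> l i = \<mu>2) \<and> (\<forall>k<N. l k = l i \<longrightarrow> k = i))"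
    and x: "x \<in> carrier_vec N" and x1: "x \<bullet> f1 = 0" and x2: "x \<bullet> f2 = 0"
  shows "x \<bullet> (S *\<^sub>v x) \<le> \<beta> * (x \<bullet> x)"
proof -
  note spD = spD[OF sp]
  define y where "y = transpose_mat U *\<^sub>v x"
  have y: "y \<in> carrier_vec N" unfolding y_def using spD x by simp
  have key: "\<And>f \<mu> i. f \<in> carrier_vec N \<Longrightarrow> S *\<^sub>v f = \<mu> \<cdot>\<^sub>v f \<Longrightarrow> f \<noteq> 0\<^sub>v N \<Longrightarrow> x \<bullet> f = 0
      \<Longrightarrow> i < N \<Longrightarrow> l i = \<mu> \<Longrightarrow> (\<forall>k<N. l k = l i \<longrightarrow> k = i) \<Longrightarrow> y $ i = 0"
  proof -
    fix f \<mu> i assume f: "f \<in> carrier_vec N" and Sf: "S *\<^sub>v f = \<mu> \<cdot>\<^sub>v f" and f0: "f \<noteq> 0\<^sub>v N"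
      and xf: "x \<bullet> f = 0" and i: "i < N" and li: "l i = \<mu>" and un: "\<forall>k<N. l k = l i \<longrightarrow> k = i"
    define z where "z = transpose_mat U *\<^sub>v f"
    have z: "z \<in> carrier_vec N" unfolding z_def using spD f by simp
    have supp: "\<forall>k<N. k \<noteq> i \<longrightarrow> z $ k = 0"
      using spec_eig[OF sp f Sf] un li unfolding z_def by metis
    have "z $ i \<noteq> 0"
    proof
      assume "z $ i = 0"
      hence "z = 0\<^sub>v N" using supp z by (intro eq_vecI, auto)
      hence "f = U *\<^sub>v 0\<^sub>v N" using spec_recon[OF sp f] unfolding z_def by simp
      moreover have "U *\<^sub>v 0\<^sub>v N = 0\<^sub>v N" using spD by (intro eq_vecI, auto)
      ultimately show False using f0 by simp
    qed
    moreover have "y $ i * z $ i = 0"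
      using xf spec_inner[OF sp x f] scalar_single[OF y z i supp] unfolding y_def z_def by simp
    ultimately show "y $ i = 0" by simp
  qed
  have "x \<bullet> (S *\<^sub>v x) = (\<Sum>i<N. l i * (y $ i)^2)" unfolding y_def by (rule spec_quad[OF sp x])
  also have "\<dots> \<le> (\<Sum>i<N. \<beta> * (y $ i)^2)"
  proof (rule sum_mono)
    fix i assume i: "i \<in> {..<N}"
    show "l i * (y $ i)^2 \<le> \<beta> * (y $ i)^2"
    proof (cases "\<bar>l i\<bar> \<le> \<beta>")
      case True
      have "l i * (y $ i)^2 \<le> \<bar>l i\<bar> * (y $ i)^2" by (intro mult_right_mono, auto)
      also have "\<dots> \<le> \<beta> * (y $ i)^2" using True by (intro mult_right_mono, auto)
      finally show ?thesis .
    next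
      case False
      with hyp i have "(l i = \<mu>1 \<or> l i = \<mu>2) \<and> (\<forall>k<N. l k = l i \<longrightarrow> k = i)" by auto
      hence "y $ i = 0" using key[OF f1(1-3) x1, of i] key[OF f2(1-3) x2, of i] i by auto
      thus ?thesis by simp
    qed
  qed
  also have "\<dots> = \<beta> * (y \<bullet> y)" using y by (simp add: scalar_prod_def lessThan_atLeast0 sum_distrib_left power2_eq_square)
  also have "y \<bullet> y = x \<bullet> x" unfolding y_def using spec_inner[OF sp x x] by simp
  finally show ?thesis .
qed

lemma sum_split_add:
  fixes f :: "nat \<Rightarrow> 'a :: comm_monoid_add"
  shows "(\<Sum>q<a+b. f q) = (\<Sum>i<a. f i) + (\<Sum>j<b. f (a+j))"
  by (induction b) (auto simp: add_ac)

definition mkv :: "nat \<Rightarrow> nat \<Rightarrow> (nat \<Rightarrow> real) \<Rightarrow> (nat \<Rightarrow> real) \<Rightarrow> real vec" where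
  "mkv nL nR a b = vec (nL + nR) (\<lambda>p. if p < nL then a p else b (p - nL))"

lemma mkv_carrier[simp]: "mkv nL nR a b \<in> carrier_vec (nL + nR)" unfolding mkv_def by simp
lemma mkv_dim[simp]: "dim_vec (mkv nL nR a b) = nL + nR" unfolding mkv_def by simp
lemma mkv_L[simp]: "i < nL \<Longrightarrow> mkv nL nR a b $ i = a i" unfolding mkv_def by simp
lemma mkv_R[simp]: "j < nR \<Longrightarrow> mkv nL nR a b $ (nL + j) = b j" unfolding mkv_def by simp

lemma mkv_eta: "v \<in> carrier_vec (nL + nR) \<Longrightarrow> v = mkv nL nR (\<lambda>i. v $ i) (\<lambda>j. v $ (nL + j))"
  unfolding mkv_def by (intro eq_vecI, auto)

lemma dot_split: "v \<in> carrier_vec (nL + nR) \<Longrightarrow> w \<in> carrier_vec (nL + nR) \<Longrightarrow>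
   v \<bullet> w = (\<Sum>i<nL. v$i * w$i) + (\<Sum>j<nR. v$(nL+j) * w$(nL+j))"
  by (simp add: scalar_prod_def lessThan_atLeast0[symmetric] sum_split_add)

lemma mkv_dot: "mkv nL nR a b \<bullet> mkv nL nR a' b' = (\<Sum>i<nL. a i * a' i) + (\<Sum>j<nR. b j * b' j)"
  by (subst dot_split[of _ nL nR], auto)

lemma bip_carrier[simp]: "bip_adj nL nR M \<in> carrier_mat (nL + nR) (nL + nR)"
  unfolding bip_adj_def by simp

lemma bip_dims[simp]: "dim_row (bip_adj nL nR M) = nL + nR" "dim_col (bip_adj nL nR M) = nL + nR"
  unfolding bip_adj_def by simp_all

lemma bip_sym: "transpose_mat (bip_adj nL nR M) = bip_adj nL nR M"
  unfolding bip_adj_def by (rule eq_matI, auto)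

lemma bip_mult_L:
  assumes v: "v \<in> carrier_vec (nL + nR)" and p: "p < nL"
  shows "(bip_adj nL nR M *\<^sub>v v) $ p = (\<Sum>j<nR. real (M p j) * v $ (nL + j))"
proof -
  have "(bip_adj nL nR M *\<^sub>v v) $ p = (\<Sum>q<nL+nR. bip_adj nL nR M $$ (p,q) * v $ q)"
    using v p by (simp add: scalar_prod_def lessThan_atLeast0)
  also have "\<dots> = (\<Sum>j<nR. real (M p j) * v $ (nL + j))"
    unfolding sum_split_add using p by (simp add: bip_adj_def)
  finally show ?thesis .
qed

lemma bip_mult_R:
  assumes v: "v \<in> carrier_vec (nL + nR)" and j: "j < nR"
  shows "(bip_adj nL nR M *\<^sub>v v) $ (nL + j) = (\<Sum>i<nL. real (M i j) * v $ i)"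
proof -
  have "(bip_adj nL nR M *\<^sub>v v) $ (nL + j) = (\<Sum>q<nL+nR. bip_adj nL nR M $$ (nL + j,q) * v $ q)"
    using v j by (simp add: scalar_prod_def lessThan_atLeast0)
  also have "\<dots> = (\<Sum>i<nL. real (M i j) * v $ i)"
  proof -
    have e1: "\<And>i. i < nL \<Longrightarrow> bip_adj nL nR M $$ (nL+j, i) = real (M i j)"
      using j unfolding bip_adj_def by simp
    have e2: "\<And>k. k < nR \<Longrightarrow> bip_adj nL nR M $$ (nL+j, nL+k) = 0"
      using j unfolding bip_adj_def by simp
    show ?thesis unfolding sum_split_add using e1 e2 by simp
  qed
  finally show ?thesis .
qed

lemma bip_quad:
  assumes v: "v \<in> carrier_vec (nL + nR)"
  shows "v \<bullet> (bip_adj nL nR M *\<^sub>v v) = 2 * (\<Sum>i<nL. \<Sum>j<nR. real (M i j) * v $ i * v $ (nL + j))"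
proof -
  have Av: "bip_adj nL nR M *\<^sub>v v \<in> carrier_vec (nL + nR)" by (rule mult_mat_vec_carrier[OF bip_carrier v])
  have 1: "(\<Sum>i<nL. v$i * (bip_adj nL nR M *\<^sub>v v)$i) = (\<Sum>i<nL. \<Sum>j<nR. real (M i j) * v $ i * v $ (nL + j))"
  proof (rule sum.cong[OF refl])
    fix i assume "i \<in> {..<nL}"
    hence "(bip_adj nL nR M *\<^sub>v v)$i = (\<Sum>j<nR. real (M i j) * v $ (nL + j))" using bip_mult_L[OF v] by simp
    thus "v$i * (bip_adj nL nR M *\<^sub>v v)$i = (\<Sum>j<nR. real (M i j) * v $ i * v $ (nL + j))"
      by (simp add: sum_distrib_left mult.left_commute mult.assoc)
  qed
  have 2: "(\<Sum>j<nR. v$(nL+j) * (bip_adj nL nR M *\<^sub>v v)$(nL+j)) = (\<Sum>j<nR. \<Sum>i<nL. real (M i j) * v $ i * v $ (nL + j))"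
  proof (rule sum.cong[OF refl])
    fix j assume "j \<in> {..<nR}"
    hence "(bip_adj nL nR M *\<^sub>v v)$(nL+j) = (\<Sum>i<nL. real (M i j) * v $ i)" using bip_mult_R[OF v] by simp
    thus "v$(nL+j) * (bip_adj nL nR M *\<^sub>v v)$(nL+j) = (\<Sum>i<nL. real (M i j) * v $ i * v $ (nL + j))"
      by (simp add: sum_distrib_left mult.commute)
  qed
  have 3: "(\<Sum>j<nR. \<Sum>i<nL. real (M i j) * v $ i * v $ (nL + j)) = (\<Sum>i<nL. \<Sum>j<nR. real (M i j) * v $ i * v $ (nL + j))"
    by (rule sum.swap)
  show ?thesis unfolding dot_split[OF v Av] 1 2 3 by simp
qed

lemma bip_quad_mkv:
  "mkv nL nR a b \<bullet> (bip_adj nL nR M *\<^sub>v mkv nL nR a b) = 2 * (\<Sum>i<nL. \<Sum>j<nR. real (M i j) * a i * b j)"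
  by (subst bip_quad, auto)

lemma bip_eig:
  assumes reg: "bip_biregular nL nR M dL dR"
    and e1: "real dL * y = t * x" and e2: "real dR * x = t * y"
  shows "bip_adj nL nR M *\<^sub>v mkv nL nR (\<lambda>_. x) (\<lambda>_. y) = t \<cdot>\<^sub>v mkv nL nR (\<lambda>_. x) (\<lambda>_. y)"
proof (rule eq_vecI)
  fix p assume "p < dim_vec (t \<cdot>\<^sub>v mkv nL nR (\<lambda>_. x) (\<lambda>_. y))"
  hence p: "p < nL + nR" by simp
  from reg have rs: "\<And>i. i < nL \<Longrightarrow> (\<Sum>j<nR. real (M i j)) = real dL"
    and cs: "\<And>j. j < nR \<Longrightarrow> (\<Sum>i<nL. real (M i j)) = real dR"
    unfolding bip_biregular_def by (metis of_nat_sum)+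
  show "(bip_adj nL nR M *\<^sub>v mkv nL nR (\<lambda>_. x) (\<lambda>_. y)) $ p = (t \<cdot>\<^sub>v mkv nL nR (\<lambda>_. x) (\<lambda>_. y)) $ p"
  proof (cases "p < nL")
    case True
    thus ?thesis using bip_mult_L[OF mkv_carrier True] rs[OF True] e1 p
      by (simp add: sum_distrib_right[symmetric])
  next
    case False
    then obtain j where j: "j < nR" and pj: "p = nL + j" using p by (metis add_diff_inverse_nat nat_add_left_cancel_less)
    thus ?thesis using bip_mult_R[OF mkv_carrier j] cs[OF j] e2 p
      by (simp add: sum_distrib_right[symmetric])
  qed
qed simp

lemma amgm2: assumes s: "(s::real) > 0" shows "2 * x * y \<le> s * x^2 + y^2 / s"
proof -
  have "0 \<le> (s * x - y)^2 / s" using s by simp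
  also have "(s * x - y)^2 / s = s * x^2 + y^2 / s - 2 * x * y" using s
    by (simp add: power2_eq_square field_simps)
  finally show ?thesis by simp
qed

lemma bireg_real:
  assumes "bip_biregular nL nR M dL dR"
  shows "\<And>i. i < nL \<Longrightarrow> (\<Sum>j<nR. real (M i j)) = real dL"
    and "\<And>j. j < nR \<Longrightarrow> (\<Sum>i<nL. real (M i j)) = real dR"
  using assms unfolding bip_biregular_def by (metis of_nat_sum)+

lemma bip_amgm_aux:
  assumes reg: "bip_biregular nL nR M dL dR" and s: "(s::real) > 0"
  shows "2 * (\<Sum>i<nL. \<Sum>j<nR. real (M i j) * a i * b j)
     \<le> s * real dL * (\<Sum>i<nL. (a i)^2) + real dR / s * (\<Sum>j<nR. (b j)^2)"
proof -
  note rs = bireg_real(1)[OF reg] and cs = bireg_real(2)[OF reg]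
  have "2 * (\<Sum>i<nL. \<Sum>j<nR. real (M i j) * a i * b j) = (\<Sum>i<nL. \<Sum>j<nR. real (M i j) * (2 * a i * b j))"
    by (simp add: sum_distrib_left mult_ac)
  also have "\<dots> \<le> (\<Sum>i<nL. \<Sum>j<nR. real (M i j) * (s * (a i)^2 + (b j)^2 / s))"
    by (intro sum_mono mult_left_mono amgm2[OF s], auto)
  also have "\<dots> = s * (\<Sum>i<nL. (a i)^2 * (\<Sum>j<nR. real (M i j))) + (1 / s) * (\<Sum>j<nR. (b j)^2 * (\<Sum>i<nL. real (M i j)))"
  proof -
    have "(\<Sum>i<nL. \<Sum>j<nR. real (M i j) * (s * (a i)^2 + (b j)^2 / s))
       = (\<Sum>i<nL. \<Sum>j<nR. s * (real (M i j) * (a i)^2) + (1/s) * (real (M i j) * (b j)^2))"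
      by (intro sum.cong refl, simp add: field_simps)
    also have "\<dots> = s * (\<Sum>i<nL. \<Sum>j<nR. real (M i j) * (a i)^2) + (1/s) * (\<Sum>i<nL. \<Sum>j<nR. real (M i j) * (b j)^2)"
      by (simp add: sum.distrib sum_distrib_left)
    also have "(\<Sum>i<nL. \<Sum>j<nR. real (M i j) * (a i)^2) = (\<Sum>i<nL. (a i)^2 * (\<Sum>j<nR. real (M i j)))"
      by (simp add: sum_distrib_left mult.commute)
    also have "(\<Sum>i<nL. \<Sum>j<nR. real (M i j) * (b j)^2) = (\<Sum>j<nR. (b j)^2 * (\<Sum>i<nL. real (M i j)))"
      by (subst sum.swap, simp add: sum_distrib_left mult.commute)
    finally show ?thesis .
  qed
  also have "(\<Sum>i<nL. (a i)^2 * (\<Sum>j<nR. real (M i j))) = real dL * (\<Sum>i<nL. (a i)^2)"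
    by (simp add: rs sum_distrib_left mult.commute)
  also have "(\<Sum>j<nR. (b j)^2 * (\<Sum>i<nL. real (M i j))) = real dR * (\<Sum>j<nR. (b j)^2)"
    by (simp add: cs sum_distrib_left mult.commute)
  finally show ?thesis by (simp add: mult_ac)
qed

lemma bip_amgm:
  assumes reg: "bip_biregular nL nR M dL dR" and s: "(s::real) > 0"
  shows "\<bar>2 * (\<Sum>i<nL. \<Sum>j<nR. real (M i j) * a i * b j)\<bar>
     \<le> s * real dL * (\<Sum>i<nL. (a i)^2) + real dR / s * (\<Sum>j<nR. (b j)^2)"
proof -
  have 1: "2 * (\<Sum>i<nL. \<Sum>j<nR. real (M i j) * a i * b j)
     \<le> s * real dL * (\<Sum>i<nL. (a i)^2) + real dR / s * (\<Sum>j<nR. (b j)^2)"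
    by (rule bip_amgm_aux[OF reg s])
  have "2 * (\<Sum>i<nL. \<Sum>j<nR. real (M i j) * (- a i) * b j)
     \<le> s * real dL * (\<Sum>i<nL. (- a i)^2) + real dR / s * (\<Sum>j<nR. (b j)^2)"
    by (rule bip_amgm_aux[OF reg s])
  hence 2: "- (2 * (\<Sum>i<nL. \<Sum>j<nR. real (M i j) * a i * b j))
     \<le> s * real dL * (\<Sum>i<nL. (a i)^2) + real dR / s * (\<Sum>j<nR. (b j)^2)"
    by (simp add: sum_negf)
  from 1 2 show ?thesis by linarith
qed

context
  fixes n \<gamma> :: nat and g :: "nat \<Rightarrow> nat"
  assumes gpos: "\<gamma> > 0" and gdvd: "\<gamma> dvd n" and grange: "\<forall>j<n. g j < n div \<gamma>"
    and gsize: "\<forall>k<n div \<gamma>. card {j. j < n \<and> g j = k} = \<gamma>"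
begin

lemma grp_sum: "(\<Sum>k<n. h k) = (\<Sum>j<n div \<gamma>. \<Sum>k\<in>{k. k < n \<and> g k = j}. (h k :: 'a :: comm_monoid_add))"
proof -
  have "(\<Sum>j\<in>{..<n div \<gamma>}. \<Sum>k\<in>{x. x \<in> {..<n} \<and> g x = j}. h k) = (\<Sum>k\<in>{..<n}. h k)"
    by (rule sum.group, use grange in auto)
  thus ?thesis by simp
qed

lemma comp_sum: "(\<Sum>k<n. (f (g k) :: real)) = real \<gamma> * (\<Sum>j<n div \<gamma>. f j)"
proof -
  have "(\<Sum>k<n. f (g k)) = (\<Sum>j<n div \<gamma>. \<Sum>k\<in>{k. k < n \<and> g k = j}. f (g k))" by (rule grp_sum)
  also have "\<dots> = (\<Sum>j<n div \<gamma>. \<Sum>k\<in>{k. k < n \<and> g k = j}. f j)"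
    by (intro sum.cong refl, auto)
  also have "\<dots> = (\<Sum>j<n div \<gamma>. real \<gamma> * f j)"
    by (intro sum.cong refl, use gsize in auto)
  finally show ?thesis by (simp add: sum_distrib_left)
qed

lemma merge_real: "(\<Sum>j<n div \<gamma>. real (merge_right n g BG i j) * y j) = (\<Sum>k<n. real (BG i k) * y (g k))"
proof -
  have "(\<Sum>j<n div \<gamma>. real (merge_right n g BG i j) * y j)
      = (\<Sum>j<n div \<gamma>. \<Sum>k\<in>{k. k < n \<and> g k = j}. real (BG i k) * y (g k))"
  proof (intro sum.cong refl)
    fix j
    have "real (merge_right n g BG i j) * y j = (\<Sum>k\<in>{k. k < n \<and> g k = j}. real (BG i k) * y j)"
      unfolding merge_right_def by (simp add: sum_distrib_right)
    also have "\<dots> = (\<Sum>k\<in>{k. k < n \<and> g k = j}. real (BG i k) * y (g k))"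
      by (intro sum.cong refl, auto)
    finally show "real (merge_right n g BG i j) * y j = (\<Sum>k\<in>{k. k < n \<and> g k = j}. real (BG i k) * y (g k))" .
  qed
  also have "\<dots> = (\<Sum>k<n. real (BG i k) * y (g k))" by (rule grp_sum[symmetric])
  finally show ?thesis .
qed

lemma merge_reg:
  assumes reg: "bip_biregular n n BG d1 d1"
  shows "bip_biregular n (n div \<gamma>) (merge_right n g BG) d1 (\<gamma> * d1)"
  unfolding bip_biregular_def
proof (intro conjI allI impI)
  fix i assume i: "i < n"
  have "(\<Sum>j<n div \<gamma>. merge_right n g BG i j) = (\<Sum>k<n. BG i k)"
    unfolding merge_right_def by (rule grp_sum[symmetric])
  also have "\<dots> = d1" using reg i unfolding bip_biregular_def by auto
  finally show "(\<Sum>j<n div \<gamma>. merge_right n g BG i j) = d1" .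
next
  fix j assume j: "j < n div \<gamma>"
  have "(\<Sum>i<n. merge_right n g BG i j) = (\<Sum>k\<in>{k. k < n \<and> g k = j}. \<Sum>i<n. BG i k)"
    unfolding merge_right_def by (rule sum.swap)
  also have "\<dots> = (\<Sum>k\<in>{k. k < n \<and> g k = j}. d1)"
    by (intro sum.cong refl, use reg in \<open>auto simp: bip_biregular_def\<close>)
  also have "\<dots> = \<gamma> * d1" using gsize j by simp
  finally show "(\<Sum>i<n. merge_right n g BG i j) = \<gamma> * d1" .
qed

end

lemma var_le: "(\<Sum>i<N. (a i - (\<Sum>k<N. a k) / real N)^2) \<le> (\<Sum>i<N. (a i)^2 :: real)"
proof (cases "N = 0")
  case False
  define p where "p = (\<Sum>k<N. a k) / real N"
  have sp: "(\<Sum>k<N. a k) = real N * p" unfolding p_def using False by simp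
  have "(\<Sum>i<N. (a i - p)^2) = (\<Sum>i<N. (a i)^2) - 2 * p * (\<Sum>i<N. a i) + real N * p^2"
    by (simp add: power2_diff sum.distrib sum_subtractf sum_distrib_left mult_ac)
  also have "\<dots> = (\<Sum>i<N. (a i)^2) - real N * p^2" unfolding sp by (simp add: power2_eq_square)
  also have "\<dots> \<le> (\<Sum>i<N. (a i)^2)" by simp
  finally show ?thesis unfolding p_def .
qed simp

context
  fixes n \<gamma> :: nat and g :: "nat \<Rightarrow> nat" and BG :: "nat \<Rightarrow> nat \<Rightarrow> nat" and d1 :: nat and \<beta> :: real
  assumes gpos: "\<gamma> > 0" and gdvd: "\<gamma> dvd n" and grange: "\<forall>j<n. g j < n div \<gamma>"
    and gsize: "\<forall>k<n div \<gamma>. card {j. j < n \<and> g j = k} = \<gamma>"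
    and reg: "bip_biregular n n BG d1 d1" and npos: "n > 0" and bpos: "\<beta> \<ge> 0"
    and Gb: "\<forall>a0 y0. (\<Sum>i<n. a0 i) = 0 \<longrightarrow> (\<Sum>k<n. y0 k) = 0 \<longrightarrow>
       2 * (\<Sum>i<n. \<Sum>k<n. real (BG i k) * a0 i * y0 k) \<le> \<beta> * ((\<Sum>i<n. (a0 i)^2) + (\<Sum>k<n. (y0 k)^2))"
begin

lemma H_bound:
  assumes cons: "(\<Sum>i<n. a i) + sqrt \<gamma> * (\<Sum>j<n div \<gamma>. b j) = 0"
  shows "2 * (\<Sum>i<n. \<Sum>j<n div \<gamma>. real (merge_right n g BG i j) * a i * b j)
     \<le> \<beta> * sqrt \<gamma> * ((\<Sum>i<n. (a i)^2) + (\<Sum>j<n div \<gamma>. (b j)^2))"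
proof -
  define m where "m = n div \<gamma>"
  have nm: "n = \<gamma> * m" unfolding m_def using gdvd by simp
  have mpos: "m > 0" using nm npos by (cases m, auto)
  define sg where "sg = sqrt (real \<gamma>)"
  have sgpos: "sg > 0" unfolding sg_def using gpos by simp
  have sg2: "sg * sg = real \<gamma>" unfolding sg_def by simp
  note rs = bireg_real(1)[OF reg] and cs = bireg_real(2)[OF reg]
  define p where "p = (\<Sum>i<n. a i) / real n"
  define q where "q = (\<Sum>j<m. b j) / real m"
  have sa: "(\<Sum>i<n. a i) = real n * p" unfolding p_def using npos by simp
  have sb: "(\<Sum>j<m. b j) = real m * q" unfolding q_def using mpos by simp
  have "real n * p + sg * (real m * q) = 0" using cons sa sb unfolding m_def sg_def by simp
  hence "sg * (real m) * (sg * p + q) = 0" unfolding nm using sg2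
    by (simp add: algebra_simps) (metis mult.assoc mult.commute)
  hence qp: "q = - sg * p" using sgpos mpos by simp
  define a0 where "a0 = (\<lambda>i. a i - p)"
  define y0 where "y0 = (\<lambda>k. b (g k) - q)"
  have sa0: "(\<Sum>i<n. a0 i) = 0" unfolding a0_def by (simp add: sum_subtractf sa)
  have "(\<Sum>k<n. b (g k)) = real \<gamma> * (\<Sum>j<m. b j)"
    using comp_sum[OF gpos gdvd grange gsize, of b] unfolding m_def by simp
  also have "\<dots> = real n * q" unfolding sb nm by simp
  finally have sy: "(\<Sum>k<n. b (g k)) = real n * q" .
  have sy0: "(\<Sum>k<n. y0 k) = 0" unfolding y0_def by (simp add: sum_subtractf sy)
  define L where "L = (\<Sum>i<n. \<Sum>j<m. real (merge_right n g BG i j) * a i * b j)"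
  have "L = (\<Sum>i<n. a i * (\<Sum>j<m. real (merge_right n g BG i j) * b j))"
    unfolding L_def by (simp add: sum_distrib_left mult_ac)
  also have "\<dots> = (\<Sum>i<n. a i * (\<Sum>k<n. real (BG i k) * b (g k)))"
    using merge_real[OF gpos gdvd grange gsize] unfolding m_def by simp
  also have "\<dots> = (\<Sum>i<n. \<Sum>k<n. real (BG i k) * (a0 i + p) * (y0 k + q))"
    unfolding a0_def y0_def by (simp add: sum_distrib_left mult_ac)
  also have "\<dots> = (\<Sum>i<n. \<Sum>k<n. real (BG i k) * a0 i * y0 k)
     + q * (\<Sum>i<n. a0 i * (\<Sum>k<n. real (BG i k)))
     + p * (\<Sum>k<n. y0 k * (\<Sum>i<n. real (BG i k)))
     + p * q * (\<Sum>i<n. \<Sum>k<n. real (BG i k))"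
  proof -
    have "(\<Sum>i<n. \<Sum>k<n. real (BG i k) * (a0 i + p) * (y0 k + q))
      = (\<Sum>i<n. \<Sum>k<n. real (BG i k) * a0 i * y0 k + q * (a0 i * real (BG i k))
           + p * (y0 k * real (BG i k)) + p * q * real (BG i k))"
      by (intro sum.cong refl, simp add: algebra_simps)
    also have "\<dots> = (\<Sum>i<n. \<Sum>k<n. real (BG i k) * a0 i * y0 k)
       + q * (\<Sum>i<n. \<Sum>k<n. a0 i * real (BG i k))
       + p * (\<Sum>i<n. \<Sum>k<n. y0 k * real (BG i k))
       + p * q * (\<Sum>i<n. \<Sum>k<n. real (BG i k))"
      by (simp add: sum.distrib sum_distrib_left)
    also have "(\<Sum>i<n. \<Sum>k<n. a0 i * real (BG i k)) = (\<Sum>i<n. a0 i * (\<Sum>k<n. real (BG i k)))"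
      by (simp add: sum_distrib_left)
    also have "(\<Sum>i<n. \<Sum>k<n. y0 k * real (BG i k)) = (\<Sum>k<n. y0 k * (\<Sum>i<n. real (BG i k)))"
      by (subst sum.swap, simp add: sum_distrib_left)
    finally show ?thesis .
  qed
  also have "(\<Sum>i<n. a0 i * (\<Sum>k<n. real (BG i k))) = 0"
    using sa0 rs by (simp add: sum_distrib_right[symmetric])
  also have "(\<Sum>k<n. y0 k * (\<Sum>i<n. real (BG i k))) = 0"
    using sy0 cs by (simp add: sum_distrib_right[symmetric])
  also have "(\<Sum>i<n. \<Sum>k<n. real (BG i k)) = real n * real d1"
    using rs by simp
  finally have Leq: "L = (\<Sum>i<n. \<Sum>k<n. real (BG i k) * a0 i * y0 k) + p * q * (real n * real d1)"
    by simp
  have pq: "p * q * (real n * real d1) \<le> 0"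
  proof -
    have "0 \<le> sg * (p * p) * (real n * real d1)" using sgpos by simp
    thus ?thesis unfolding qp by (simp add: mult_ac)
  qed
  define t where "t = sqrt sg"
  have tpos: "t > 0" unfolding t_def using sgpos by simp
  have t2: "t * t = sg" unfolding t_def using sgpos by simp
  define a1 where "a1 = (\<lambda>i. t * a0 i)"
  define y1 where "y1 = (\<lambda>k. y0 k / t)"
  have "(\<Sum>i<n. a1 i) = 0" unfolding a1_def using sa0 by (simp add: sum_distrib_left[symmetric])
  moreover have "(\<Sum>k<n. y1 k) = 0" unfolding y1_def using sy0 by (simp add: sum_divide_distrib[symmetric])
  ultimately have G1: "2 * (\<Sum>i<n. \<Sum>k<n. real (BG i k) * a1 i * y1 k) \<le> \<beta> * ((\<Sum>i<n. (a1 i)^2) + (\<Sum>k<n. (y1 k)^2))"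
    using Gb by blast
  have "(\<Sum>i<n. \<Sum>k<n. real (BG i k) * a1 i * y1 k) = (\<Sum>i<n. \<Sum>k<n. real (BG i k) * a0 i * y0 k)"
    unfolding a1_def y1_def using tpos by (intro sum.cong refl, simp)
  moreover have "(\<Sum>i<n. (a1 i)^2) = sg * (\<Sum>i<n. (a0 i)^2)"
    unfolding a1_def sum_distrib_left
  proof (intro sum.cong refl)
    fix i show "(t * a0 i)^2 = sg * (a0 i)^2" using t2 by (simp add: power_mult_distrib power2_eq_square)
  qed
  moreover have "(\<Sum>k<n. (y1 k)^2) = (\<Sum>k<n. (y0 k)^2) / sg"
    unfolding y1_def using t2 by (simp add: power_divide sum_divide_distrib power2_eq_square)
  moreover have "(\<Sum>k<n. (y0 k)^2) = real \<gamma> * (\<Sum>j<m. (b j - q)^2)"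
    unfolding y0_def m_def using comp_sum[OF gpos gdvd grange gsize, of "\<lambda>j. (b j - q)^2"] by simp
  ultimately have G2: "2 * (\<Sum>i<n. \<Sum>k<n. real (BG i k) * a0 i * y0 k)
       \<le> \<beta> * (sg * (\<Sum>i<n. (a0 i)^2) + real \<gamma> * (\<Sum>j<m. (b j - q)^2) / sg)"
    using G1 by simp
  have "real \<gamma> / sg = sg" using sg2 sgpos by (simp add: field_simps)
  hence "sg * (\<Sum>i<n. (a0 i)^2) + real \<gamma> * (\<Sum>j<m. (b j - q)^2) / sg
       = sg * ((\<Sum>i<n. (a0 i)^2) + (\<Sum>j<m. (b j - q)^2))"
  proof -
    have "real \<gamma> * (\<Sum>j<m. (b j - q)^2) / sg = sg * (\<Sum>j<m. (b j - q)^2)"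
      unfolding sg2[symmetric] using sgpos by simp
    thus ?thesis by (simp add: distrib_left)
  qed
  also have "\<dots> \<le> sg * ((\<Sum>i<n. (a i)^2) + (\<Sum>j<m. (b j)^2))"
  proof -
    have "(\<Sum>i<n. (a0 i)^2) \<le> (\<Sum>i<n. (a i)^2)" unfolding a0_def p_def by (rule var_le)
    moreover have "(\<Sum>j<m. (b j - q)^2) \<le> (\<Sum>j<m. (b j)^2)" unfolding q_def by (rule var_le)
    ultimately show ?thesis using sgpos by (intro mult_left_mono, auto)
  qed
  finally have "2 * (\<Sum>i<n. \<Sum>k<n. real (BG i k) * a0 i * y0 k) \<le> \<beta> * (sg * ((\<Sum>i<n. (a i)^2) + (\<Sum>j<m. (b j)^2)))"
    using G2 bpos by (meson mult_left_mono order_trans)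
  hence "2 * L \<le> \<beta> * (sg * ((\<Sum>i<n. (a i)^2) + (\<Sum>j<m. (b j)^2)))"
  proof -
    have "2 * L = 2 * (\<Sum>i<n. \<Sum>k<n. real (BG i k) * a0 i * y0 k) + 2 * (p * q * (real n * real d1))"
      unfolding Leq by (simp add: distrib_left)
    thus ?thesis using pq \<open>2 * (\<Sum>i<n. \<Sum>k<n. real (BG i k) * a0 i * y0 k) \<le> \<beta> * (sg * ((\<Sum>i<n. (a i)^2) + (\<Sum>j<m. (b j)^2)))\<close>
      by linarith
  qed
  thus ?thesis unfolding L_def m_def sg_def by (simp add: mult_ac)
qed

end

lemma spec_abs_bound:
  assumes sp: "spec N S U l" and hyp: "\<forall>x\<in>carrier_vec N. \<bar>x \<bullet> (S *\<^sub>v x)\<bar> \<le> t * (x \<bullet> x)"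
    and i: "i < N"
  shows "\<bar>l i\<bar> \<le> t"
proof -
  note spD = spD[OF sp]
  define y where "y = (unit_vec N i :: real vec)"
  have y: "y \<in> carrier_vec N" unfolding y_def by simp
  define x where "x = U *\<^sub>v y"
  have x: "x \<in> carrier_vec N" unfolding x_def using spD y by simp
  have Ux: "transpose_mat U *\<^sub>v x = y" unfolding x_def by (rule spec_coord[OF sp y])
  have "x \<bullet> x = y \<bullet> y" unfolding spec_inner[OF sp x x] Ux ..
  also have "\<dots> = 1" unfolding y_def using i by simp
  finally have xx: "x \<bullet> x = 1" .
  have "x \<bullet> (S *\<^sub>v x) = (\<Sum>k<N. l k * (y $ k)^2)" unfolding spec_quad[OF sp x] Ux ..
  also have "\<dots> = (\<Sum>k<N. if k = i then l k else 0)"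
    by (intro sum.cong refl, auto simp: y_def i)
  also have "\<dots> = l i" using i by simp
  finally show ?thesis using hyp x xx by force
qed

lemma spec_eig_exists:
  assumes sp: "spec N S U l" and f: "f \<in> carrier_vec N" and f0: "f \<noteq> 0\<^sub>v N"
    and Sf: "S *\<^sub>v f = \<mu> \<cdot>\<^sub>v f"
  shows "\<exists>i<N. l i = \<mu>"
proof (rule ccontr)
  assume "\<not> (\<exists>i<N. l i = \<mu>)"
  hence "\<forall>i<N. (transpose_mat U *\<^sub>v f) $ i = 0" using spec_eig[OF sp f Sf] by blast
  hence "transpose_mat U *\<^sub>v f = 0\<^sub>v N" using spD[OF sp] by (intro eq_vecI, auto)
  hence "f = U *\<^sub>v 0\<^sub>v N" using spec_recon[OF sp f] by simp
  moreover have "U *\<^sub>v 0\<^sub>v N = 0\<^sub>v N" using spD[OF sp] by (intro eq_vecI, auto)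
  ultimately show False using f0 by simp
qed

lemma count_map_upt: "count (mset (map l [0..<N])) x = card {i. i < N \<and> l i = x}"
proof -
  have "count (mset (map l [0..<N])) x = length (filter ((=) x) (map l [0..<N]))"
    unfolding count_mset count_list_eq_length_filter ..
  also have "\<dots> = card {i. i < length (map l [0..<N]) \<and> x = map l [0..<N] ! i}"
    by (rule length_filter_conv_card)
  also have "\<dots> = card {i. i < N \<and> l i = x}" by (intro arg_cong[where f = card], auto)
  finally show ?thesis .
qed

lemma count_ge2:
  assumes "i < N" "k < N" "i \<noteq> k" "l i = x" "l k = x"
  shows "count (mset (map l [0..<N])) x \<ge> 2"
proof -
  have "{i, k} \<subseteq> {i. i < N \<and> l i = x}" using assms by auto
  hence "card {i, k} \<le> card {i. i < N \<and> l i = x}" by (intro card_mono, auto)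
  thus ?thesis unfolding count_map_upt using assms by simp
qed

lemma count_le1:
  assumes "\<forall>k<N. l k = x \<longrightarrow> k = i"
  shows "count (mset (map l [0..<N])) x \<le> 1"
proof -
  have "{i. i < N \<and> l i = x} \<subseteq> {i}" using assms by auto
  hence "card {i. i < N \<and> l i = x} \<le> card {i}" by (intro card_mono, auto)
  thus ?thesis unfolding count_map_upt by simp
qed

theorem proposition2:
  fixes n d1 \<gamma> :: nat and BG :: "nat \<Rightarrow> nat \<Rightarrow> nat" and \<alpha> :: real and g :: "nat \<Rightarrow> nat"
  assumes regG: "bip_biregular n n BG d1 d1"
    and alpha: "second_eig (bip_adj n n BG) (sqrt (real d1 * real d1)) \<le> \<alpha>"
    and gpos: "\<gamma> > 0" and gdvd: "\<gamma> dvd n"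
    and grange: "\<forall>j<n. g j < n div \<gamma>"
    and gsize: "\<forall>k<n div \<gamma>. card {j. j < n \<and> g j = k} = \<gamma>"
  shows "\<bar>second_eig (bip_adj n (n div \<gamma>) (merge_right n g BG))
            (sqrt (real d1 * real (\<gamma> * d1)))\<bar>
         \<le> sqrt (real d1 * real (\<gamma> * d1)) * \<alpha>"
proof -
  define m where "m = n div \<gamma>"
  define C where "C = merge_right n g BG"
  define AG where "AG = bip_adj n n BG"
  define AH where "AH = bip_adj n m C"
  define sg where "sg = sqrt (real \<gamma>)"
  have sgpos: "sg > 0" unfolding sg_def using gpos by simp
  have sg2: "sg * sg = real \<gamma>" unfolding sg_def by simp
  define tH where "tH = sqrt (real d1 * real (\<gamma> * d1))"
  have tH: "tH = real d1 * sg" unfolding tH_def sg_def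
    by (simp add: real_sqrt_mult mult_ac)
  have tG: "sqrt (real d1 * real d1) = real d1" by simp
  have regH: "bip_biregular n m C d1 (\<gamma> * d1)"
    unfolding m_def C_def by (rule merge_reg[OF gpos gdvd grange gsize regG])
  obtain UG lG where spG: "spec (n + n) AG UG lG"
    using spec_ex[OF bip_carrier bip_sym] unfolding AG_def by blast
  obtain UH lH where spH: "spec (n + m) AH UH lH"
    using spec_ex[OF bip_carrier bip_sym] unfolding AH_def by blast
  define MG where "MG = mset (map lG [0..<n + n])"
  define MH where "MH = mset (map lH [0..<n + m])"
  have eG: "eigenvalues_mset AG = MG" unfolding eigenvalues_mset_def MG_def by (rule spec_proots[OF spG])
  have eH: "eigenvalues_mset AH = MH" unfolding eigenvalues_mset_def MH_def by (rule spec_proots[OF spH])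
  define EG where "EG = MG - {#real d1, - real d1#}"
  define EH where "EH = MH - {#tH, - tH#}"
  have seG: "second_eig AG (real d1) = Max (insert 0 (abs ` set_mset EG))"
    unfolding second_eig_def eG EG_def ..
  have seH: "second_eig AH tH = Max (insert 0 (abs ` set_mset EH))"
    unfolding second_eig_def eH EH_def ..
  have alpha': "Max (insert 0 (abs ` set_mset EG)) \<le> \<alpha>"
    using alpha unfolding seG[symmetric] AG_def tG .
  have a0: "\<alpha> \<ge> 0" using alpha' by (meson Max_ge finite_imageI finite_insert finite_set_mset insertI1 order_trans)
  have EGb: "\<And>y. y \<in># EG \<Longrightarrow> \<bar>y\<bar> \<le> \<alpha>"
    using alpha' by (meson Max_ge finite_imageI finite_insert finite_set_mset image_eqI insertI2 order_trans)
  have tHpos: "tH \<ge> 0" unfolding tH using sgpos by simp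
  have F1: "\<And>i. i < n + m \<Longrightarrow> \<bar>lH i\<bar> \<le> tH"
  proof (rule spec_abs_bound[OF spH])
    show "\<forall>x\<in>carrier_vec (n + m). \<bar>x \<bullet> (AH *\<^sub>v x)\<bar> \<le> tH * (x \<bullet> x)"
    proof
      fix x :: "real vec" assume x: "x \<in> carrier_vec (n + m)"
      define a where "a = (\<lambda>i. x $ i)"
      define b where "b = (\<lambda>j. x $ (n + j))"
      have xe: "x = mkv n m a b" unfolding a_def b_def by (rule mkv_eta[OF x])
      have "\<bar>x \<bullet> (AH *\<^sub>v x)\<bar> = \<bar>2 * (\<Sum>i<n. \<Sum>j<m. real (C i j) * a i * b j)\<bar>"
        unfolding xe AH_def bip_quad_mkv ..
      also have "\<dots> \<le> sg * real d1 * (\<Sum>i<n. (a i)^2) + real (\<gamma> * d1) / sg * (\<Sum>j<m. (b j)^2)"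
        by (rule bip_amgm[OF regH sgpos])
      also have "real (\<gamma> * d1) / sg = tH" unfolding tH using sg2 sgpos by (simp add: field_simps)
      also have "sg * real d1 = tH" unfolding tH by simp
      also have "tH * (\<Sum>i<n. (a i)^2) + tH * (\<Sum>j<m. (b j)^2) = tH * (x \<bullet> x)"
        unfolding xe mkv_dot by (simp add: power2_eq_square distrib_left)
      finally show "\<bar>x \<bullet> (AH *\<^sub>v x)\<bar> \<le> tH * (x \<bullet> x)" .
    qed
  qed
  have main: "\<And>x. x \<in># EH \<Longrightarrow> \<bar>x\<bar> \<le> tH * \<alpha>"
  proof -
    fix x assume xE: "x \<in># EH"
    hence "x \<in># MH" unfolding EH_def by (rule in_diffD)
    then obtain i where i: "i < n + m" and xi: "x = lH i" unfolding MH_def by auto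
    show "\<bar>x\<bar> \<le> tH * \<alpha>"
    proof (cases "\<alpha> \<ge> 1 \<or> d1 = 0")
      case True
      thus ?thesis
      proof
        assume "\<alpha> \<ge> 1"
        hence "tH \<le> tH * \<alpha>" using tHpos by (simp add: mult_le_cancel_left1)
        thus ?thesis using F1[OF i] xi by simp
      next
        assume "d1 = 0"
        hence "tH = 0" unfolding tH by simp
        thus ?thesis using F1[OF i] xi by simp
      qed
    next
      case False
      hence a1: "\<alpha> < 1" and d1: "d1 \<ge> 1" by auto
      have npos: "n > 0" using i unfolding m_def by (cases n, auto)
      have d1ne: "real d1 \<noteq> - real d1" using d1 by simp
      define f1 where "f1 = mkv n n (\<lambda>_. 1) (\<lambda>_. 1)"
      define f2 where "f2 = mkv n n (\<lambda>_. 1) (\<lambda>_. -1)"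
      have f1e: "AG *\<^sub>v f1 = real d1 \<cdot>\<^sub>v f1" unfolding AG_def f1_def by (rule bip_eig[OF regG], simp_all)
      have f2e: "AG *\<^sub>v f2 = (- real d1) \<cdot>\<^sub>v f2" unfolding AG_def f2_def by (rule bip_eig[OF regG], simp_all)
      have f10: "f1 \<noteq> 0\<^sub>v (n + n)"
      proof
        assume "f1 = 0\<^sub>v (n + n)"
        hence "f1 $ 0 = 0" using npos by simp
        moreover have "f1 $ 0 = 1" unfolding f1_def using npos by simp
        ultimately show False by simp
      qed
      have f20: "f2 \<noteq> 0\<^sub>v (n + n)"
      proof
        assume "f2 = 0\<^sub>v (n + n)"
        hence "f2 $ 0 = 0" using npos by simp
        moreover have "f2 $ 0 = 1" unfolding f2_def using npos by simp
        ultimately show False by simp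
      qed
      have hypG: "\<forall>k<n + n. \<bar>lG k\<bar> \<le> \<alpha> \<or> ((lG k = real d1 \<or> lG k = - real d1) \<and> (\<forall>k'<n + n. lG k' = lG k \<longrightarrow> k' = k))"
      proof (intro allI impI)
        fix k assume k: "k < n + n"
        show "\<bar>lG k\<bar> \<le> \<alpha> \<or> ((lG k = real d1 \<or> lG k = - real d1) \<and> (\<forall>k'<n + n. lG k' = lG k \<longrightarrow> k' = k))"
        proof (rule ccontr)
          assume neg: "\<not> ?thesis"
          hence nb: "\<not> \<bar>lG k\<bar> \<le> \<alpha>" and alt: "\<not> ((lG k = real d1 \<or> lG k = - real d1) \<and> (\<forall>k'<n + n. lG k' = lG k \<longrightarrow> k' = k))"
            by auto
          have "lG k \<in># EG"
          proof (cases "lG k = real d1 \<or> lG k = - real d1")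
            case False
            have "count EG (lG k) = count MG (lG k)" unfolding EG_def using False by auto
            moreover have "lG k \<in># MG" unfolding MG_def using k by auto
            ultimately show ?thesis by (metis count_greater_zero_iff)
          next
            case True
            then obtain k' where k': "k' < n + n" "lG k' = lG k" "k' \<noteq> k" using alt by auto
            have "count MG (lG k) \<ge> 2" unfolding MG_def by (rule count_ge2[OF k k'(1) k'(3)[symmetric] refl k'(2)])
            moreover have "count EG (lG k) = count MG (lG k) - 1" unfolding EG_def using True d1ne by auto
            ultimately have "count EG (lG k) > 0" by simp
            thus ?thesis by simp
          qed
          hence "\<bar>lG k\<bar> \<le> \<alpha>" by (rule EGb)
          with nb show False by simp
        qed
      qed
      have Gb: "\<forall>a0 y0. (\<Sum>i<n. a0 i) = 0 \<longrightarrow> (\<Sum>k<n. y0 k) = 0 \<longrightarrow>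
         2 * (\<Sum>i<n. \<Sum>k<n. real (BG i k) * a0 i * y0 k) \<le> \<alpha> * ((\<Sum>i<n. (a0 i)^2) + (\<Sum>k<n. (y0 k)^2))"
      proof (intro allI impI)
        fix a0 y0 :: "nat \<Rightarrow> real" assume s1: "(\<Sum>i<n. a0 i) = 0" and s2: "(\<Sum>k<n. y0 k) = 0"
        define v where "v = mkv n n a0 y0"
        have v1: "v \<bullet> f1 = 0" unfolding v_def f1_def mkv_dot using s1 s2 by simp
        have v2: "v \<bullet> f2 = 0" unfolding v_def f2_def mkv_dot using s1 s2 by (simp add: sum_negf)
        have "v \<bullet> (AG *\<^sub>v v) \<le> \<alpha> * (v \<bullet> v)"
          by (rule spec_bound_perp[OF spG _ f1e f10 _ f2e f20 hypG _ v1 v2], auto simp: v_def f1_def f2_def)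
        thus "2 * (\<Sum>i<n. \<Sum>k<n. real (BG i k) * a0 i * y0 k) \<le> \<alpha> * ((\<Sum>i<n. (a0 i)^2) + (\<Sum>k<n. (y0 k)^2))"
          unfolding v_def AG_def bip_quad_mkv mkv_dot by (simp add: power2_eq_square)
      qed
      define c where "c = \<alpha> * sg"
      have Hb: "\<And>a b. (\<Sum>i<n. a i) + sg * (\<Sum>j<m. b j) = 0 \<Longrightarrow>
          2 * (\<Sum>i<n. \<Sum>j<m. real (C i j) * a i * b j) \<le> c * ((\<Sum>i<n. (a i)^2) + (\<Sum>j<m. (b j)^2))"
        using H_bound[OF gpos gdvd grange gsize regG npos a0 Gb] unfolding C_def m_def c_def sg_def by simp
      define wP where "wP = mkv n m (\<lambda>_. 1) (\<lambda>_. sg)"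
      define wM where "wM = mkv n m (\<lambda>_. 1) (\<lambda>_. - sg)"
      have wPe: "AH *\<^sub>v wP = tH \<cdot>\<^sub>v wP" unfolding AH_def wP_def
        by (rule bip_eig[OF regH], simp add: tH, simp add: tH mult.assoc sg2)
      have wMe: "AH *\<^sub>v wM = (- tH) \<cdot>\<^sub>v wM" unfolding AH_def wM_def
        by (rule bip_eig[OF regH], simp add: tH, simp add: tH mult.assoc sg2)
      have wP0: "wP \<noteq> 0\<^sub>v (n + m)"
      proof
        assume "wP = 0\<^sub>v (n + m)"
        hence "wP $ 0 = 0" using npos by simp
        moreover have "wP $ 0 = 1" unfolding wP_def using npos by simp
        ultimately show False by simp
      qed
      have wM0: "wM \<noteq> 0\<^sub>v (n + m)"
      proof
        assume "wM = 0\<^sub>v (n + m)"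
        hence "wM $ 0 = 0" using npos by simp
        moreover have "wM $ 0 = 1" unfolding wM_def using npos by simp
        ultimately show False by simp
      qed
      obtain iP where iP: "iP < n + m" "lH iP = tH"
        using spec_eig_exists[OF spH _ wP0 wPe] unfolding wP_def by auto
      obtain iM where iM: "iM < n + m" "lH iM = - tH"
        using spec_eig_exists[OF spH _ wM0 wMe] unfolding wM_def by auto
      have hypP: "\<forall>v\<in>carrier_vec (n + m). v \<bullet> wP = 0 \<longrightarrow> 1 * (v \<bullet> (AH *\<^sub>v v)) \<le> c * (v \<bullet> v)"
      proof (intro ballI impI)
        fix v :: "real vec" assume v: "v \<in> carrier_vec (n + m)" and vw: "v \<bullet> wP = 0"
        define a where "a = (\<lambda>i. v $ i)"
        define b where "b = (\<lambda>j. v $ (n + j))"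
        have ve: "v = mkv n m a b" unfolding a_def b_def by (rule mkv_eta[OF v])
        have "(\<Sum>i<n. a i) + sg * (\<Sum>j<m. b j) = 0"
          using vw unfolding ve wP_def mkv_dot by (simp add: sum_distrib_left mult.commute)
        from Hb[OF this] show "1 * (v \<bullet> (AH *\<^sub>v v)) \<le> c * (v \<bullet> v)"
          unfolding ve AH_def bip_quad_mkv mkv_dot by (simp add: power2_eq_square)
      qed
      have hypM: "\<forall>v\<in>carrier_vec (n + m). v \<bullet> wM = 0 \<longrightarrow> (-1) * (v \<bullet> (AH *\<^sub>v v)) \<le> c * (v \<bullet> v)"
      proof (intro ballI impI)
        fix v :: "real vec" assume v: "v \<in> carrier_vec (n + m)" and vw: "v \<bullet> wM = 0"
        define a where "a = (\<lambda>i. v $ i)"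
        define b where "b = (\<lambda>j. v $ (n + j))"
        have ve: "v = mkv n m a b" unfolding a_def b_def by (rule mkv_eta[OF v])
        have "(\<Sum>i<n. a i) + sg * (\<Sum>j<m. - b j) = 0"
          using vw unfolding ve wM_def mkv_dot by (simp add: sum_distrib_left mult.commute sum_negf)
        from Hb[OF this] show "(-1) * (v \<bullet> (AH *\<^sub>v v)) \<le> c * (v \<bullet> v)"
          unfolding ve AH_def bip_quad_mkv mkv_dot by (simp add: power2_eq_square sum_negf)
      qed
      have "sg \<le> sg * real d1" using d1 sgpos by (simp add: mult_le_cancel_left1)
      hence "\<alpha> * sg \<le> \<alpha> * (sg * real d1)" using a0 by (rule mult_left_mono)
      hence cle: "c \<le> tH * \<alpha>" unfolding c_def tH by (simp add: mult_ac)
      have ctH: "c < tH" unfolding c_def tH using a1 d1 sgpos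
        by (smt (verit) mult_le_cancel_right1 mult_strict_right_mono of_nat_1 of_nat_le_iff)
      have tHne: "tH \<noteq> - tH" using ctH c_def a0 sgpos by (smt (verit) mult_nonneg_nonneg)
      show ?thesis
      proof (rule ccontr)
        assume "\<not> \<bar>x\<bar> \<le> tH * \<alpha>"
        hence xc: "\<bar>x\<bar> > c" using cle by simp
        have xin: "count EH x > 0" using xE by simp
        consider "x > c" | "x < - c" using xc by linarith
        thus False
        proof cases
          case 1
          have wPc: "wP \<in> carrier_vec (n + m)" unfolding wP_def by simp
          have uniq: "\<forall>k<n + m. lH k = tH \<longrightarrow> k = iP"
            using spec_at_most_one[OF spH wPc hypP _ iP(1)] iP(2) ctH by auto
          have "i = iP" using spec_at_most_one[OF spH wPc hypP i iP(1)] iP(2) ctH 1 xi by auto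
          hence xt: "x = tH" using xi iP by simp
          have "count MH tH \<le> 1" unfolding MH_def by (rule count_le1[OF uniq])
          hence "count EH tH = 0" unfolding EH_def using tHne by auto
          thus False using xin xt by simp
        next
          case 2
          have wMc: "wM \<in> carrier_vec (n + m)" unfolding wM_def by simp
          have uniq: "\<forall>k<n + m. lH k = - tH \<longrightarrow> k = iM"
            using spec_at_most_one[OF spH wMc hypM _ iM(1)] iM(2) ctH by auto
          have "i = iM" using spec_at_most_one[OF spH wMc hypM i iM(1)] iM(2) ctH 2 xi by auto
          hence xt: "x = - tH" using xi iM by simp
          have "count MH (- tH) \<le> 1" unfolding MH_def by (rule count_le1[OF uniq])
          hence "count EH (- tH) = 0" unfolding EH_def using tHne by auto
          thus False using xin xt by simp
        qed
      qed
    qed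
  qed
  have "second_eig AH tH \<le> tH * \<alpha>"
    unfolding seH using main tHpos a0 by (auto intro!: Max.boundedI)
  moreover have "second_eig AH tH \<ge> 0"
    unfolding seH by (rule Max_ge, auto)
  ultimately show ?thesis unfolding AH_def C_def m_def tH_def by simp
qed

end
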